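(* $\mathfrak{L}(\mathbf{F}_2\times\mathbf{F}_2)^w_{O(n)} \subsetneq \mathsf{RE}$.
   Context: For a group $G$ with identity $e$, a $G$-automaton is a tuple $(Q,\Sigma,G,\delta,q_0,Q_a)$ where $Q$ is a finite set of states, $\Sigma$ a finite input alphabet, $q_0\in Q$ the initial state, $Q_a\subseteq Q$ the accepting states, and $\delta$ assigns to each $(q,\sigma)\in Q\times(\Sigma\cup\{\varepsilon\})$ a finite set of pairs $(q',m)\in Q\times G$. The register holds an element of $G$, initially $e$; using a transition $(q',m)\in\delta(q,\sigma)$ (one step) the automaton reads $\sigma$ (or nothing), moves to $q'$ and replaces the register content $x$ by $xm$. A word is accepted if some computation reads it entirely and ends in an accepting state with register equal to $e$. A $G$-automaton recognizing $\mathtt{L}$ is weakly $t(n)$ time-bounded if every $x\in\mathtt{L}$ with $|x|=n$ has an accepting computation of at most $t(n)$ steps; $\mathfrak{L}(G)^w_{O(n)}$ is the class of languages recognized by weakly $t(n)$ time-bounded $G$-automata for some $t(n)=O(n)$. $\mathbf{F}_2$ is the free group of rank 2; $\mathsf{RE}$ is the class of recursively enumerable languages. *)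

theory Defs
  imports "HOL-Algebra.Group" "HOL-Library.Nat_Bijection" "HOL-Library.Landau_Symbols"
begin

text \<open>Letters: (generator index, inverse flag).\<close>
type_synonym gen2 = "bool \<times> bool"

definition inv_gen :: "gen2 \<Rightarrow> gen2" where
  "inv_gen = (\<lambda>(x, s). (x, \<not> s))"

fun red :: "gen2 list \<Rightarrow> gen2 list" where
  "red [] = []"
| "red (g # w) = (case red w of [] \<Rightarrow> [g]
                   | h # r \<Rightarrow> (if h = inv_gen g then r else g # h # r))"

definition reduced :: "gen2 list \<Rightarrow> bool" where
  "reduced w \<longleftrightarrow> (\<forall>i. Suc i < length w \<longrightarrow> w ! Suc i \<noteq> inv_gen (w ! i))"

definition free_group2 :: "gen2 list monoid" where
  "free_group2 = \<lparr>carrier = {w. reduced w}, mult = (\<lambda>x y. red (x @ y)), one = []\<rparr>"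

text \<open>\<open>\<delta> q None\<close> are the epsilon-transitions, \<open>\<delta> q (Some \<sigma>)\<close> those reading \<open>\<sigma>\<close>.\<close>
definition is_G_automaton ::
  "('g, 'm) monoid_scheme \<Rightarrow> 'q set \<Rightarrow> 'a set \<Rightarrow> ('q \<Rightarrow> 'a option \<Rightarrow> ('q \<times> 'g) set)
     \<Rightarrow> 'q \<Rightarrow> 'q set \<Rightarrow> bool" where
  "is_G_automaton G Q \<Sigma> \<delta> q0 Qa \<longleftrightarrow>
     finite Q \<and> finite \<Sigma> \<and> q0 \<in> Q \<and> Qa \<subseteq> Q \<and>
     (\<forall>q s. finite (\<delta> q s) \<and> \<delta> q s \<subseteq> Q \<times> carrier G) \<and>
     (\<forall>q s. (q \<notin> Q \<or> (\<exists>a. s = Some a \<and> a \<notin> \<Sigma>)) \<longrightarrow> \<delta> q s = {})"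

inductive comp :: "('g, 'm) monoid_scheme \<Rightarrow> ('q \<Rightarrow> 'a option \<Rightarrow> ('q \<times> 'g) set)
     \<Rightarrow> 'q \<Rightarrow> 'a list \<Rightarrow> 'g \<Rightarrow> nat \<Rightarrow> 'q \<Rightarrow> 'g \<Rightarrow> bool"
  for G \<delta> where
  comp_nil: "comp G \<delta> q [] x 0 q x"
| comp_read: "(q1, m) \<in> \<delta> q (Some a) \<Longrightarrow> comp G \<delta> q1 w (x \<otimes>\<^bsub>G\<^esub> m) n q' x'
     \<Longrightarrow> comp G \<delta> q (a # w) x (Suc n) q' x'"
| comp_eps: "(q1, m) \<in> \<delta> q None \<Longrightarrow> comp G \<delta> q1 w (x \<otimes>\<^bsub>G\<^esub> m) n q' x'
     \<Longrightarrow> comp G \<delta> q w x (Suc n) q' x'"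

definition accepts_within ::
  "('g, 'm) monoid_scheme \<Rightarrow> ('q \<Rightarrow> 'a option \<Rightarrow> ('q \<times> 'g) set) \<Rightarrow> 'q \<Rightarrow> 'q set
     \<Rightarrow> 'a list \<Rightarrow> nat \<Rightarrow> bool" where
  "accepts_within G \<delta> q0 Qa w k \<longleftrightarrow>
     (\<exists>n q. comp G \<delta> q0 w \<one>\<^bsub>G\<^esub> n q \<one>\<^bsub>G\<^esub> \<and> q \<in> Qa \<and> n \<le> k)"

definition G_lang ::
  "('g, 'm) monoid_scheme \<Rightarrow> 'a set \<Rightarrow> ('q \<Rightarrow> 'a option \<Rightarrow> ('q \<times> 'g) set) \<Rightarrow> 'q \<Rightarrow> 'q set
     \<Rightarrow> 'a list set" where
  "G_lang G \<Sigma> \<delta> q0 Qa = {w \<in> lists \<Sigma>. \<exists>k. accepts_within G \<delta> q0 Qa w k}"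

text \<open>The class of languages recognised by weakly \<open>O(n)\<close> time-bounded G-automata
  (states taken from nat without loss of generality, since Q is finite).\<close>
definition weak_lin_class :: "('g, 'm) monoid_scheme \<Rightarrow> 'a list set set" where
  "weak_lin_class G = {L. \<exists>(Q :: nat set) \<Sigma> \<delta> q0 Qa (t :: nat \<Rightarrow> nat).
     is_G_automaton G Q \<Sigma> \<delta> q0 Qa \<and> G_lang G \<Sigma> \<delta> q0 Qa = L \<and>
     (\<lambda>n. real (t n)) \<in> O(\<lambda>n. real n) \<and>
     (\<forall>w \<in> L. accepts_within G \<delta> q0 Qa w (t (length w)))}"

datatype recf = Zf | Sf | Idf nat | Cnf recf "recf list" | Prf recf recf | Mnf recf

inductive rec_eval :: "recf \<Rightarrow> nat list \<Rightarrow> nat \<Rightarrow> bool" where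
  "rec_eval Zf xs 0"
| "rec_eval Sf (x # xs) (Suc x)"
| "i < length xs \<Longrightarrow> rec_eval (Idf i) xs (xs ! i)"
| "list_all2 (\<lambda>g y. rec_eval g xs y) gs ys \<Longrightarrow> rec_eval f ys r \<Longrightarrow> rec_eval (Cnf f gs) xs r"
| "rec_eval f xs r \<Longrightarrow> rec_eval (Prf f g) (0 # xs) r"
| "rec_eval (Prf f g) (n # xs) r \<Longrightarrow> rec_eval g (n # r # xs) r'
     \<Longrightarrow> rec_eval (Prf f g) (Suc n # xs) r'"
| "rec_eval f (n # xs) 0 \<Longrightarrow> (\<forall>i<n. \<exists>r. rec_eval f (i # xs) r \<and> 0 < r)
     \<Longrightarrow> rec_eval (Mnf f) xs n"

definition RE :: "nat list set set" where
  "RE = {L. \<exists>\<Sigma>. finite \<Sigma> \<and> L \<subseteq> lists \<Sigma> \<and>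
           (\<exists>f. \<forall>w. w \<in> L \<longleftrightarrow> (\<exists>r. rec_eval f [list_encode w] r))}"

end

theory Submission
  imports Defs
begin


definition computes :: "recf \<Rightarrow> nat \<Rightarrow> (nat list \<Rightarrow> nat) \<Rightarrow> bool" where
  "computes f k F \<longleftrightarrow> (\<forall>xs. length xs = k \<longrightarrow> (\<forall>r. rec_eval f xs r \<longleftrightarrow> r = F xs))"

definition PR :: "nat \<Rightarrow> (nat list \<Rightarrow> nat) \<Rightarrow> bool" where
  "PR k F \<longleftrightarrow> (\<exists>f. computes f k F)"

lemma PR_cong: "PR k F \<Longrightarrow> (\<And>xs. length xs = k \<Longrightarrow> F xs = G xs) \<Longrightarrow> PR k G"
  unfolding PR_def computes_def by metis

lemma PR_zero: "PR k (\<lambda>xs. 0)"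
proof -
  have "computes Zf k (\<lambda>xs. 0)"
    unfolding computes_def by (auto intro: rec_eval.intros elim: rec_eval.cases)
  then show ?thesis unfolding PR_def by blast
qed

lemma PR_Suc0: "PR (Suc k) (\<lambda>xs. Suc (xs ! 0))"
proof -
  have "computes Sf (Suc k) (\<lambda>xs. Suc (xs ! 0))"
    unfolding computes_def
  proof (intro allI impI)
    fix xs :: "nat list" and r :: nat assume "length xs = Suc k"
    then obtain y ys where xs: "xs = y # ys" by (cases xs) auto
    show "rec_eval Sf xs r \<longleftrightarrow> r = Suc (xs ! 0)"
      unfolding xs by (auto intro: rec_eval.intros elim: rec_eval.cases)
  qed
  then show ?thesis unfolding PR_def by blast
qed

lemma PR_proj: "i < k \<Longrightarrow> PR k (\<lambda>xs. xs ! i)"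
proof -
  assume i: "i < k"
  have "computes (Idf i) k (\<lambda>xs. xs ! i)"
    unfolding computes_def using i by (auto intro: rec_eval.intros elim: rec_eval.cases)
  then show ?thesis unfolding PR_def by blast
qed

lemma list_all2_eval:
  assumes "list_all2 (\<lambda>g G. computes g k G) gs Gs" "length xs = k"
  shows "list_all2 (\<lambda>g y. rec_eval g xs y) gs ys \<longleftrightarrow> ys = map (\<lambda>G. G xs) Gs"
  using assms(1)
proof (induction gs Gs arbitrary: ys rule: list_all2_induct)
  case Nil
  then show ?case by auto
next
  case (Cons g G gs Gs)
  then show ?case using assms(2) unfolding computes_def
    by (cases ys) auto
qed

lemma PR_comp:
  assumes "PR (length Gs) F" "\<forall>G\<in>set Gs. PR k G"
  shows "PR k (\<lambda>xs. F (map (\<lambda>G. G xs) Gs))"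
proof -
  obtain f where f: "computes f (length Gs) F" using assms(1) unfolding PR_def by blast
  have "\<exists>gs. list_all2 (\<lambda>g G. computes g k G) gs Gs" using assms(2)
  proof (induction Gs)
    case Nil then show ?case by auto
  next
    case (Cons G Gs)
    then obtain gs where "list_all2 (\<lambda>g G. computes g k G) gs Gs" by auto
    moreover obtain g where "computes g k G" using Cons.prems unfolding PR_def by auto
    ultimately show ?case by (intro exI[of _ "g # gs"]) auto
  qed
  then obtain gs where gs: "list_all2 (\<lambda>g G. computes g k G) gs Gs" by blast
  have "computes (Cnf f gs) k (\<lambda>xs. F (map (\<lambda>G. G xs) Gs))"
    unfolding computes_def
  proof (intro allI impI)
    fix xs :: "nat list" and r :: nat assume len: "length xs = k"
    have e: "list_all2 (\<lambda>g y. rec_eval g xs y) gs ys \<longleftrightarrow> ys = map (\<lambda>G. G xs) Gs" for ys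
      using list_all2_eval[OF gs len] .
    show "rec_eval (Cnf f gs) xs r \<longleftrightarrow> r = F (map (\<lambda>G. G xs) Gs)"
    proof
      assume "rec_eval (Cnf f gs) xs r"
      then obtain ys where "list_all2 (\<lambda>g y. rec_eval g xs y) gs ys" "rec_eval f ys r"
        by (auto elim: rec_eval.cases)
      then show "r = F (map (\<lambda>G. G xs) Gs)" using e f unfolding computes_def by auto
    next
      assume "r = F (map (\<lambda>G. G xs) Gs)"
      then show "rec_eval (Cnf f gs) xs r" using e f unfolding computes_def
        by (auto intro: rec_eval.intros)
    qed
  qed
  then show ?thesis unfolding PR_def by blast
qed

lemma PR_prec:
  assumes "PR k F" "PR (Suc (Suc k)) G"
  shows "PR (Suc k) (\<lambda>xs. rec_nat (F (tl xs)) (\<lambda>n r. G (n # r # tl xs)) (hd xs))"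
proof -
  obtain f where f: "computes f k F" using assms(1) unfolding PR_def by blast
  obtain g where g: "computes g (Suc (Suc k)) G" using assms(2) unfolding PR_def by blast
  have main: "\<forall>r. rec_eval (Prf f g) (n # ys) r \<longleftrightarrow> r = rec_nat (F ys) (\<lambda>n r. G (n # r # ys)) n"
    if len: "length ys = k" for n ys
  proof (induction n)
    case 0
    show ?case using f len unfolding computes_def
      by (auto intro: rec_eval.intros elim: rec_eval.cases)
  next
    case (Suc n)
    show ?case
    proof (intro allI iffI)
      fix r assume "rec_eval (Prf f g) (Suc n # ys) r"
      then obtain r0 where "rec_eval (Prf f g) (n # ys) r0" "rec_eval g (n # r0 # ys) r"
        by (auto elim: rec_eval.cases)
      then show "r = rec_nat (F ys) (\<lambda>n r. G (n # r # ys)) (Suc n)"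
        using Suc g len unfolding computes_def by auto
    next
      fix r assume "r = rec_nat (F ys) (\<lambda>n r. G (n # r # ys)) (Suc n)"
      then show "rec_eval (Prf f g) (Suc n # ys) r"
        using Suc g len unfolding computes_def by (auto intro: rec_eval.intros)
    qed
  qed
  have "computes (Prf f g) (Suc k) (\<lambda>xs. rec_nat (F (tl xs)) (\<lambda>n r. G (n # r # tl xs)) (hd xs))"
    unfolding computes_def
  proof (intro allI impI)
    fix xs :: "nat list" and r :: nat assume "length xs = Suc k"
    then obtain n ys where xs: "xs = n # ys" "length ys = k" by (cases xs) auto
    show "rec_eval (Prf f g) xs r \<longleftrightarrow> r = rec_nat (F (tl xs)) (\<lambda>n r. G (n # r # tl xs)) (hd xs)"
      using main[OF xs(2)] xs by simp
  qed
  then show ?thesis unfolding PR_def by blast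
qed

lemma PR_reindex:
  assumes "PR m F" "\<forall>i<m. idx i < k"
  shows "PR k (\<lambda>xs. F (map (\<lambda>i. xs ! idx i) [0..<m]))"
proof -
  have "PR k (\<lambda>xs. F (map (\<lambda>G. G xs) (map (\<lambda>i xs. xs ! idx i) [0..<m])))"
    by (rule PR_comp) (use assms in \<open>auto intro: PR_proj\<close>)
  then show ?thesis by (simp add: comp_def)
qed

lemma PR_comp1: "PR 1 F \<Longrightarrow> PR k f \<Longrightarrow> PR k (\<lambda>xs. F [f xs])"
  using PR_comp[of "[f]" F k] by simp
lemma PR_comp2: "PR 2 F \<Longrightarrow> PR k f \<Longrightarrow> PR k g \<Longrightarrow> PR k (\<lambda>xs. F [f xs, g xs])"
  using PR_comp[of "[f, g]" F k] by (simp add: numeral_eq_Suc)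
lemma PR_comp3: "PR 3 F \<Longrightarrow> PR k f \<Longrightarrow> PR k g \<Longrightarrow> PR k h \<Longrightarrow> PR k (\<lambda>xs. F [f xs, g xs, h xs])"
  using PR_comp[of "[f, g, h]" F k] by (simp add: numeral_eq_Suc)
lemma PR_comp4: "PR 4 F \<Longrightarrow> PR k f \<Longrightarrow> PR k g \<Longrightarrow> PR k h \<Longrightarrow> PR k u \<Longrightarrow>
   PR k (\<lambda>xs. F [f xs, g xs, h xs, u xs])"
  using PR_comp[of "[f, g, h, u]" F k] by (simp add: numeral_eq_Suc)

lemma map_nth_upt: "length xs = k \<Longrightarrow> map (\<lambda>i. xs ! i) [0..<k] = xs"
  using map_nth[of xs] by simp

lemma PR_rec:
  assumes "PR k B" "PR (Suc (Suc k)) S" "PR k N"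
  shows "PR k (\<lambda>xs. rec_nat (B xs) (\<lambda>n r. S (n # r # xs)) (N xs))"
proof -
  have H: "PR (Suc k) (\<lambda>xs. rec_nat (B (tl xs)) (\<lambda>n r. S (n # r # tl xs)) (hd xs))"
    by (rule PR_prec[OF assms(1,2)])
  have "PR k (\<lambda>xs. (\<lambda>xs. rec_nat (B (tl xs)) (\<lambda>n r. S (n # r # tl xs)) (hd xs))
        (map (\<lambda>G. G xs) (N # map (\<lambda>i xs. xs ! i) [0..<k])))"
    by (rule PR_comp) (use H assms(3) in \<open>auto intro: PR_proj\<close>)
  then show ?thesis
    by (rule PR_cong) (simp add: comp_def map_nth_upt)
qed

lemma PR_const: "PR k (\<lambda>xs. c)"
proof (induction c)
  case 0 then show ?case by (rule PR_zero)
next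
  case (Suc c)
  have "PR 1 (\<lambda>xs. Suc (xs ! 0))" using PR_Suc0[of 0] by simp
  from PR_comp1[OF this Suc] show ?case by simp
qed


lemma rec_sum: "rec_nat 0 (\<lambda>n r. r + F n) m = (\<Sum>i<m. F i)" by (induction m) auto
lemma rec_add: "rec_nat b (\<lambda>n r. Suc r) n = n + b" by (induction n) auto
lemma rec_mult: "rec_nat 0 (\<lambda>n r. r + b) n = n * b" by (induction n) auto
lemma rec_pred: "rec_nat 0 (\<lambda>n r. n) n = n - 1" by (induction n) auto
lemma rec_sub: "rec_nat a (\<lambda>n r. r - Suc 0) n = a - n" by (induction n) auto

lemma PR_Suc: "PR k f \<Longrightarrow> PR k (\<lambda>xs. Suc (f xs))"
proof -
  assume f: "PR k f"
  have "PR 1 (\<lambda>xs. Suc (xs ! 0))" using PR_Suc0[of 0] by simp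
  from PR_comp1[OF this f] show ?thesis by simp
qed

lemma PR_add2: "PR 2 (\<lambda>xs. xs ! 0 + xs ! 1)"
proof -
  have "PR 2 (\<lambda>xs. rec_nat (xs ! 1) (\<lambda>n r. (\<lambda>ys. Suc (ys ! 1)) (n # r # xs)) (xs ! 0))"
    by (rule PR_rec) (use PR_Suc[OF PR_proj[of 1 4]] in \<open>auto intro: PR_proj simp: numeral_eq_Suc\<close>)
  then show ?thesis by (rule PR_cong) (simp add: rec_add)
qed

lemma PR_mult2: "PR 2 (\<lambda>xs. xs ! 0 * xs ! 1)"
proof -
  have a: "PR 4 (\<lambda>xs. xs ! 1 + xs ! 3)"
    using PR_comp2[OF PR_add2 PR_proj[of 1 4] PR_proj[of 3 4]] by simp
  have "PR 2 (\<lambda>xs. rec_nat 0 (\<lambda>n r. (\<lambda>ys. ys ! 1 + ys ! 3) (n # r # xs)) (xs ! 0))"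
    by (rule PR_rec) (use a in \<open>auto intro: PR_proj PR_const simp: numeral_eq_Suc\<close>)
  then show ?thesis by (rule PR_cong) (auto simp add: rec_mult numeral_eq_Suc)
qed

lemma PR_pred1: "PR 1 (\<lambda>xs. xs ! 0 - 1)"
proof -
  have "PR 1 (\<lambda>xs. rec_nat 0 (\<lambda>n r. (\<lambda>ys. ys ! 0) (n # r # xs)) (xs ! 0))"
    by (rule PR_rec) (auto intro: PR_proj PR_const)
  then show ?thesis by (rule PR_cong) (simp add: rec_pred)
qed

lemma PR_sub2: "PR 2 (\<lambda>xs. xs ! 0 - xs ! 1)"
proof -
  have a: "PR 4 (\<lambda>xs. xs ! 1 - 1)"
    using PR_comp1[OF PR_pred1 PR_proj[of 1 4]] by simp
  have "PR 2 (\<lambda>xs. rec_nat (xs ! 0) (\<lambda>n r. (\<lambda>ys. ys ! 1 - 1) (n # r # xs)) (xs ! 1))"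
    by (rule PR_rec) (use a in \<open>auto intro: PR_proj PR_const simp: numeral_eq_Suc\<close>)
  then show ?thesis by (rule PR_cong) (simp add: rec_sub)
qed

lemma PR_add: "PR k f \<Longrightarrow> PR k g \<Longrightarrow> PR k (\<lambda>xs. f xs + g xs)"
  using PR_comp2[OF PR_add2] by simp
lemma PR_mult: "PR k f \<Longrightarrow> PR k g \<Longrightarrow> PR k (\<lambda>xs. f xs * g xs)"
  using PR_comp2[OF PR_mult2] by simp
lemma PR_sub: "PR k f \<Longrightarrow> PR k g \<Longrightarrow> PR k (\<lambda>xs. f xs - g xs)"
  using PR_comp2[OF PR_sub2] by simp

definition PRP :: "nat \<Rightarrow> (nat list \<Rightarrow> bool) \<Rightarrow> bool" where
  "PRP k P \<longleftrightarrow> PR k (\<lambda>xs. if P xs then 1 else 0)"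

lemmas PR_basic = PR_const PR_add PR_mult PR_sub PR_Suc

lemma PRP_eq: assumes "PR k f" "PR k g" shows "PRP k (\<lambda>xs. f xs = g xs)"
proof -
  have "PR k (\<lambda>xs. 1 - ((f xs - g xs) + (g xs - f xs)))" by (intro PR_basic assms)
  then show ?thesis unfolding PRP_def by (rule PR_cong) auto
qed

lemma PRP_le: assumes "PR k f" "PR k g" shows "PRP k (\<lambda>xs. f xs \<le> g xs)"
proof -
  have "PR k (\<lambda>xs. 1 - (f xs - g xs))" by (intro PR_basic assms)
  then show ?thesis unfolding PRP_def by (rule PR_cong) auto
qed

lemma PRP_less: assumes "PR k f" "PR k g" shows "PRP k (\<lambda>xs. f xs < g xs)"
proof -
  have "PR k (\<lambda>xs. 1 - (Suc (f xs) - g xs))" by (intro PR_basic assms)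
  then show ?thesis unfolding PRP_def by (rule PR_cong) auto
qed

lemma PRP_not: assumes "PRP k P" shows "PRP k (\<lambda>xs. \<not> P xs)"
proof -
  have "PR k (\<lambda>xs. 1 - (if P xs then 1 else 0))" by (intro PR_basic assms[unfolded PRP_def])
  then show ?thesis unfolding PRP_def by (rule PR_cong) auto
qed

lemma PRP_and: assumes "PRP k P" "PRP k Q" shows "PRP k (\<lambda>xs. P xs \<and> Q xs)"
proof -
  have "PR k (\<lambda>xs. (if P xs then 1 else 0) * (if Q xs then 1 else 0))"
    by (intro PR_basic assms[unfolded PRP_def])
  then show ?thesis unfolding PRP_def by (rule PR_cong) auto
qed

lemma PRP_or: "PRP k P \<Longrightarrow> PRP k Q \<Longrightarrow> PRP k (\<lambda>xs. P xs \<or> Q xs)"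
proof -
  assume "PRP k P" "PRP k Q"
  then have "PRP k (\<lambda>xs. \<not> (\<not> P xs \<and> \<not> Q xs))" by (intro PRP_not PRP_and)
  then show ?thesis unfolding PRP_def by (rule PR_cong) auto
qed

lemma PRP_imp: "PRP k P \<Longrightarrow> PRP k Q \<Longrightarrow> PRP k (\<lambda>xs. P xs \<longrightarrow> Q xs)"
proof -
  assume "PRP k P" "PRP k Q"
  then have "PRP k (\<lambda>xs. \<not> P xs \<or> Q xs)" by (intro PRP_not PRP_or)
  then show ?thesis unfolding PRP_def by (rule PR_cong) auto
qed

lemma PR_if: assumes "PRP k P" "PR k f" "PR k g" shows "PR k (\<lambda>xs. if P xs then f xs else g xs)"
proof -
  have "PR k (\<lambda>xs. (if P xs then 1 else 0) * f xs + (1 - (if P xs then 1 else 0)) * g xs)"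
    by (intro PR_basic assms[unfolded PRP_def] assms)
  then show ?thesis by (rule PR_cong) auto
qed

lemma PR_sum:
  assumes F: "PR (Suc k) (\<lambda>ys. F (ys ! 0) (map (\<lambda>j. ys ! Suc j) [0..<k]))" and N: "PR k N"
  shows "PR k (\<lambda>xs. \<Sum>i<N xs. F i xs)"
proof -
  have F2: "PR (Suc (Suc k)) (\<lambda>ys. F (ys ! 0) (drop 2 ys))"
  proof -
    have "PR (Suc (Suc k)) (\<lambda>ys. (\<lambda>ys. F (ys ! 0) (map (\<lambda>j. ys ! Suc j) [0..<k]))
       (map (\<lambda>i. ys ! (if i = 0 then 0 else Suc i)) [0..<Suc k]))"
      by (rule PR_reindex[OF F]) auto
    then show ?thesis
    proof (rule PR_cong)
      fix ys :: "nat list" assume l: "length ys = Suc (Suc k)"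
      have "map (\<lambda>j. map (\<lambda>i. ys ! (if i = 0 then 0 else Suc i)) [0..<Suc k] ! Suc j) [0..<k]
            = drop 2 ys"
        by (rule nth_equalityI) (use l in \<open>auto simp: nth_append simp del: upt_Suc\<close>)
      then show "(\<lambda>ys. F (ys ! 0) (map (\<lambda>j. ys ! Suc j) [0..<k]))
         (map (\<lambda>i. ys ! (if i = 0 then 0 else Suc i)) [0..<Suc k]) = F (ys ! 0) (drop 2 ys)"
        by (simp del: upt_Suc add: nth_Cons')
    qed
  qed
  have S: "PR (Suc (Suc k)) (\<lambda>ys. ys ! 1 + F (ys ! 0) (drop 2 ys))"
    by (rule PR_add[OF PR_proj F2]) simp
  have "PR k (\<lambda>xs. rec_nat 0 (\<lambda>n r. (\<lambda>ys. ys ! 1 + F (ys ! 0) (drop 2 ys)) (n # r # xs)) (N xs))"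
    by (rule PR_rec[OF PR_const S N])
  then show ?thesis
  proof (rule PR_cong)
    fix xs :: "nat list"
    show "rec_nat 0 (\<lambda>n r. (\<lambda>ys. ys ! 1 + F (ys ! 0) (drop 2 ys)) (n # r # xs)) (N xs) = (\<Sum>i<N xs. F i xs)"
      using rec_sum[of "\<lambda>i. F i xs" "N xs"] by simp
  qed
qed


lemma PRP_ex:
  assumes "PRP (Suc k) (\<lambda>ys. P (ys ! 0) (map (\<lambda>j. ys ! Suc j) [0..<k]))" "PR k N"
  shows "PRP k (\<lambda>xs. \<exists>i<N xs. P i xs)"
proof -
  have "PR k (\<lambda>xs. 1 - (1 - (\<Sum>i<N xs. if P i xs then 1 else 0)))"
    by (intro PR_basic PR_sum assms(1)[unfolded PRP_def] assms(2))
  then show ?thesis unfolding PRP_def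
  proof (rule PR_cong)
    fix xs :: "nat list"
    have "(\<Sum>i<N xs. if P i xs then 1 else 0) = (0::nat) \<longleftrightarrow> \<not> (\<exists>i<N xs. P i xs)"
      by auto
    moreover have "1 - (1 - s) = (if s = 0 then 0 else (1::nat))" for s :: nat by simp
    ultimately show "1 - (1 - (\<Sum>i<N xs. if P i xs then 1 else 0)) = (if \<exists>i<N xs. P i xs then 1 else (0::nat))"
      by (simp only:) (metis (no_types, lifting))
  qed
qed

lemma PRP_all:
  assumes "PRP (Suc k) (\<lambda>ys. P (ys ! 0) (map (\<lambda>j. ys ! Suc j) [0..<k]))" "PR k N"
  shows "PRP k (\<lambda>xs. \<forall>i<N xs. P i xs)"
proof -
  have "PRP k (\<lambda>xs. \<not> (\<exists>i<N xs. \<not> P i xs))"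
    by (intro PRP_not PRP_ex assms)
  then show ?thesis unfolding PRP_def by (rule PR_cong) auto
qed

lemma PRP_True: "PRP k (\<lambda>xs. True)" unfolding PRP_def using PR_const by simp

lemmas PR_I = PR_const PR_proj PR_add PR_mult PR_sub PR_Suc PR_if PR_sum
  PRP_eq PRP_le PRP_less PRP_not PRP_and PRP_or PRP_imp PRP_ex PRP_all

lemma "PR 2 (\<lambda>xs. \<Sum>i<xs!0. if i * xs!1 \<le> xs!0 \<and> (\<exists>j < i. j + 1 = xs ! 1) then 1 else 0)"
  by (intro PR_I | simp)+


lemma PR_lift1: "PR 1 (\<lambda>xs. h (xs ! 0)) \<Longrightarrow> PR k f \<Longrightarrow> PR k (\<lambda>xs. h (f xs))"
  using PR_comp1[of "\<lambda>xs. h (xs ! 0)"] by simp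
lemma PR_lift2: "PR 2 (\<lambda>xs. h (xs ! 0) (xs ! 1)) \<Longrightarrow> PR k f \<Longrightarrow> PR k g \<Longrightarrow> PR k (\<lambda>xs. h (f xs) (g xs))"
  using PR_comp2[of "\<lambda>xs. h (xs ! 0) (xs ! 1)"] by simp
lemma PR_lift3: "PR 3 (\<lambda>xs. h (xs ! 0) (xs ! 1) (xs ! 2)) \<Longrightarrow> PR k f \<Longrightarrow> PR k g \<Longrightarrow> PR k u \<Longrightarrow>
   PR k (\<lambda>xs. h (f xs) (g xs) (u xs))"
  using PR_comp3[of "\<lambda>xs. h (xs ! 0) (xs ! 1) (xs ! 2)"] by simp
lemma PR_lift4: "PR 4 (\<lambda>xs. h (xs ! 0) (xs ! 1) (xs ! 2) (xs ! 3)) \<Longrightarrow> PR k f \<Longrightarrow> PR k g \<Longrightarrow> PR k u \<Longrightarrow>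
   PR k v \<Longrightarrow> PR k (\<lambda>xs. h (f xs) (g xs) (u xs) (v xs))"
  using PR_comp4[of "\<lambda>xs. h (xs ! 0) (xs ! 1) (xs ! 2) (xs ! 3)"] by simp

lemma sum_count_less: "q \<le> n \<Longrightarrow> (\<Sum>i<n. if i < q then 1 else 0) = (q::nat)"
proof (induction n)
  case 0 then show ?case by simp
next
  case (Suc n)
  then show ?case by (cases "q = Suc n") auto
qed

lemma le_div_iff': "0 < d \<Longrightarrow> Suc i * d \<le> n \<longleftrightarrow> i < n div (d::nat)"
  using div_less_iff_less_mult[of d n "Suc i"] by auto

lemma PR_div2: "PR 2 (\<lambda>xs. xs ! 0 div xs ! 1)"
proof -
  have "PR 2 (\<lambda>xs. if xs ! 1 = 0 then 0 else \<Sum>i<xs ! 0. if Suc i * xs ! 1 \<le> xs ! 0 then 1 else 0)"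
    by (intro PR_I | simp)+
  then show ?thesis
  proof (rule PR_cong)
    fix xs :: "nat list"
    show "(if xs ! 1 = 0 then 0 else \<Sum>i<xs ! 0. if Suc i * xs ! 1 \<le> xs ! 0 then 1 else 0) = xs ! 0 div xs ! 1"
    proof (cases "xs ! 1 = 0")
      case False
      then have e: "\<And>i. (Suc i * xs ! 1 \<le> xs ! 0) = (i < xs ! 0 div xs ! 1)"
        using le_div_iff' by blast
      have "(\<Sum>i<xs ! 0. if Suc i * xs ! 1 \<le> xs ! 0 then 1 else 0) =
          (\<Sum>i<xs ! 0. if i < xs ! 0 div xs ! 1 then 1 else (0::nat))"
        by (intro sum.cong refl) (simp only: e)
      also have "\<dots> = xs ! 0 div xs ! 1" by (rule sum_count_less) simp
      finally show ?thesis using False by simp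
    qed simp
  qed
qed

lemma PR_div: "PR k f \<Longrightarrow> PR k g \<Longrightarrow> PR k (\<lambda>xs. f xs div g xs)"
  by (rule PR_lift2[OF PR_div2])

lemma PR_mod: "PR k f \<Longrightarrow> PR k g \<Longrightarrow> PR k (\<lambda>xs. f xs mod g xs)"
proof -
  assume "PR k f" "PR k g"
  then have "PR k (\<lambda>xs. f xs - f xs div g xs * g xs)" by (intro PR_I PR_div)
  then show ?thesis by (rule PR_cong) (simp add: minus_div_mult_eq_mod)
qed

lemma rec_pow: "rec_nat (Suc 0) (\<lambda>n r. r * b) e = b ^ e" by (induction e) (auto simp: mult.commute)

lemma PR_pow2: "PR 2 (\<lambda>xs. xs ! 0 ^ xs ! 1)"
proof -
  have "PR 2 (\<lambda>xs. rec_nat 1 (\<lambda>n r. (\<lambda>ys. ys ! 1 * ys ! 2) (n # r # xs)) (xs ! 1))"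
    by (rule PR_rec) (intro PR_I | simp)+
  then show ?thesis by (rule PR_cong) (simp add: rec_pow)
qed

lemma PR_pow: "PR k f \<Longrightarrow> PR k g \<Longrightarrow> PR k (\<lambda>xs. f xs ^ g xs)"
  by (rule PR_lift2[OF PR_pow2])

definition pe :: "nat \<Rightarrow> nat \<Rightarrow> nat" where "pe a b = prod_encode (a, b)"
definition pf :: "nat \<Rightarrow> nat" where "pf n = fst (prod_decode n)"
definition ps :: "nat \<Rightarrow> nat" where "ps n = snd (prod_decode n)"

lemma triangle_sum: "triangle n = (\<Sum>i<n. Suc i)" by (induction n) auto

lemma PR_pe2: "PR 2 (\<lambda>xs. pe (xs ! 0) (xs ! 1))"
proof -
  have "PR 2 (\<lambda>xs. (\<Sum>i<xs ! 0 + xs ! 1. Suc i) + xs ! 0)"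
    by (intro PR_I | simp)+
  then show ?thesis by (rule PR_cong) (simp only: pe_def prod_encode_def triangle_sum prod.case)
qed

lemma PR_pe: "PR k f \<Longrightarrow> PR k g \<Longrightarrow> PR k (\<lambda>xs. pe (f xs) (g xs))"
  by (rule PR_lift2[OF PR_pe2])


lemma pe_iff: "pe a b = n \<longleftrightarrow> a = pf n \<and> b = ps n"
  by (auto simp: pe_def pf_def ps_def)
lemma pf_le: "pf n \<le> n"
  using le_prod_encode_1[of "pf n" "ps n"] by (simp add: pf_def ps_def)
lemma ps_le: "ps n \<le> n"
  using le_prod_encode_2[of "ps n" "pf n"] by (simp add: pf_def ps_def)
lemma pf_sum: "(\<Sum>a<Suc n. if \<exists>b<Suc n. pe a b = n then a else 0) = pf n"
proof -
  have "(\<Sum>a<Suc n. if \<exists>b<Suc n. pe a b = n then a else 0) = (\<Sum>a<Suc n. if a = pf n then a else 0)"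
    by (intro sum.cong refl) (simp add: pe_iff ps_le le_imp_less_Suc)
  also have "\<dots> = pf n" using pf_le[of n] by (subst sum.delta) auto
  finally show ?thesis .
qed
lemma ps_sum: "(\<Sum>b<Suc n. if \<exists>a<Suc n. pe a b = n then b else 0) = ps n"
proof -
  have "(\<Sum>b<Suc n. if \<exists>a<Suc n. pe a b = n then b else 0) = (\<Sum>b<Suc n. if b = ps n then b else 0)"
    by (intro sum.cong refl) (simp add: pe_iff pf_le le_imp_less_Suc)
  also have "\<dots> = ps n" using ps_le[of n] by (subst sum.delta) auto
  finally show ?thesis .
qed

lemma PR_pf1: "PR 1 (\<lambda>xs. pf (xs ! 0))"
proof -
  have "PR 1 (\<lambda>xs. \<Sum>a<Suc (xs ! 0). if \<exists>b<Suc (xs ! 0). pe a b = xs ! 0 then a else 0)"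
    by (intro PR_I PR_pe | simp)+
  then show ?thesis by (rule PR_cong) (simp only: pf_sum)
qed

lemma PR_ps1: "PR 1 (\<lambda>xs. ps (xs ! 0))"
proof -
  have "PR 1 (\<lambda>xs. \<Sum>b<Suc (xs ! 0). if \<exists>a<Suc (xs ! 0). pe a b = xs ! 0 then b else 0)"
    by (intro PR_I PR_pe | simp)+
  then show ?thesis by (rule PR_cong) (simp only: ps_sum)
qed

lemma PR_pf: "PR k f \<Longrightarrow> PR k (\<lambda>xs. pf (f xs))" by (rule PR_lift1[OF PR_pf1])
lemma PR_ps: "PR k f \<Longrightarrow> PR k (\<lambda>xs. ps (f xs))" by (rule PR_lift1[OF PR_ps1])


lemma PRP_lift1: "PRP 1 (\<lambda>xs. P (xs ! 0)) \<Longrightarrow> PR k f \<Longrightarrow> PRP k (\<lambda>xs. P (f xs))"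
  unfolding PRP_def by (rule PR_lift1[where h="\<lambda>a. if P a then 1 else 0"])
lemma PRP_lift2: "PRP 2 (\<lambda>xs. P (xs ! 0) (xs ! 1)) \<Longrightarrow> PR k f \<Longrightarrow> PR k g \<Longrightarrow> PRP k (\<lambda>xs. P (f xs) (g xs))"
  unfolding PRP_def by (rule PR_lift2[where h="\<lambda>a b. if P a b then 1 else 0"])

definition tlc :: "nat \<Rightarrow> nat" where "tlc n = ps (n - 1)"
definition hdc :: "nat \<Rightarrow> nat" where "hdc n = pf (n - 1)"
definition tls :: "nat \<Rightarrow> nat \<Rightarrow> nat" where "tls l i = rec_nat l (\<lambda>_ r. tlc r) i"
definition lnth :: "nat \<Rightarrow> nat \<Rightarrow> nat" where "lnth l i = hdc (tls l i)"
definition llen :: "nat \<Rightarrow> nat" where "llen l = (\<Sum>i<l. if tls l i \<noteq> 0 then 1 else 0)"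
definition lmem :: "nat \<Rightarrow> nat \<Rightarrow> bool" where "lmem l x \<longleftrightarrow> (\<exists>i<llen l. lnth l i = x)"

lemma PR_tlc: "PR k f \<Longrightarrow> PR k (\<lambda>xs. tlc (f xs))"
  unfolding tlc_def by (intro PR_ps PR_I)
lemma PR_hdc: "PR k f \<Longrightarrow> PR k (\<lambda>xs. hdc (f xs))"
  unfolding hdc_def by (intro PR_pf PR_I)

lemma PR_tls2: "PR 2 (\<lambda>xs. tls (xs ! 0) (xs ! 1))"
proof -
  have "PR 2 (\<lambda>xs. rec_nat (xs ! 0) (\<lambda>n r. (\<lambda>ys. tlc (ys ! 1)) (n # r # xs)) (xs ! 1))"
    by (rule PR_rec) (intro PR_I PR_tlc | simp)+
  then show ?thesis by (rule PR_cong) (simp add: tls_def)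
qed
lemma PR_tls: "PR k f \<Longrightarrow> PR k g \<Longrightarrow> PR k (\<lambda>xs. tls (f xs) (g xs))"
  by (rule PR_lift2[OF PR_tls2])
lemma PR_lnth: "PR k f \<Longrightarrow> PR k g \<Longrightarrow> PR k (\<lambda>xs. lnth (f xs) (g xs))"
  unfolding lnth_def by (intro PR_hdc PR_tls)
lemma PR_llen1: "PR 1 (\<lambda>xs. llen (xs ! 0))"
  unfolding llen_def by (intro PR_I PR_tls | simp)+
lemma PR_llen: "PR k f \<Longrightarrow> PR k (\<lambda>xs. llen (f xs))"
  by (rule PR_lift1[OF PR_llen1])
lemma PRP_lmem2: "PRP 2 (\<lambda>xs. lmem (xs ! 0) (xs ! 1))"
  unfolding lmem_def by (intro PR_I PR_lnth PR_llen | simp)+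
lemma PRP_lmem: "PR k f \<Longrightarrow> PR k g \<Longrightarrow> PRP k (\<lambda>xs. lmem (f xs) (g xs))"
  by (rule PRP_lift2[OF PRP_lmem2])

lemma tls_Suc: "tls l (Suc i) = tlc (tls l i)" by (simp add: tls_def)
lemma tls_0: "tls l 0 = l" by (simp add: tls_def)

lemma tlc_list: "tlc (Suc (prod_encode (x, y))) = y"
  by (simp add: tlc_def ps_def)
lemma hdc_list: "hdc (Suc (prod_encode (x, y))) = x"
  by (simp add: hdc_def pf_def)
lemma tlc_0: "tlc 0 = 0"
  by (simp add: tlc_def ps_def prod_decode_def prod_decode_aux.simps)

lemma tls_list: "tls (list_encode xs) i = list_encode (drop i xs)"
proof (induction i)
  case 0 then show ?case by (simp add: tls_0)
next
  case (Suc i)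
  show ?case
  proof (cases "drop i xs")
    case Nil
    then have "drop (Suc i) xs = []" by (simp add: drop_Suc tl_drop[symmetric])
    then show ?thesis using Suc Nil by (simp add: tls_Suc tlc_0)
  next
    case (Cons y ys)
    then have "drop (Suc i) xs = ys" by (simp add: drop_Suc tl_drop[symmetric])
    then show ?thesis using Suc Cons by (simp add: tls_Suc tlc_list)
  qed
qed

lemma lnth_list: "i < length xs \<Longrightarrow> lnth (list_encode xs) i = xs ! i"
  by (simp add: lnth_def tls_list Cons_nth_drop_Suc[symmetric] hdc_list)

lemma length_le_list_encode: "length xs \<le> list_encode xs"
proof (induction xs)
  case Nil then show ?case by simp
next
  case (Cons x xs)
  then show ?case using le_prod_encode_2[of "list_encode xs" x] by simp
qed

lemma list_encode_0_iff: "list_encode xs = 0 \<longleftrightarrow> xs = []"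
  by (cases xs) auto

lemma tls_list_nz: "tls (list_encode xs) i \<noteq> 0 \<longleftrightarrow> i < length xs"
  by (auto simp: tls_list list_encode_0_iff)

lemma llen_list: "llen (list_encode xs) = length xs"
proof -
  have "llen (list_encode xs) = (\<Sum>i<list_encode xs. if i < length xs then 1 else 0)"
    unfolding llen_def by (simp only: tls_list_nz)
  also have "\<dots> = length xs" by (rule sum_count_less[OF length_le_list_encode])
  finally show ?thesis .
qed

lemma lmem_list: "lmem (list_encode xs) x \<longleftrightarrow> x \<in> set xs"
  unfolding lmem_def llen_list by (auto simp: lnth_list in_set_conv_nth)


definition cd :: "gen2 \<Rightarrow> nat" where
  "cd g = 1 + (if fst g then 2 else 0) + (if snd g then 1 else 0)"

fun enc :: "gen2 list \<Rightarrow> nat" where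
  "enc [] = 0"
| "enc (g # w) = cd g + 5 * enc w"

definition invd :: "nat \<Rightarrow> nat" where
  "invd d = (if d = 1 then 2 else if d = 2 then 1 else if d = 3 then 4 else if d = 4 then 3 else 0)"

definition crn :: "nat \<Rightarrow> nat \<Rightarrow> nat" where
  "crn d n = (if d = 0 then n else if n mod 5 = invd d then n div 5 else d + 5 * n)"

definition digit :: "nat \<Rightarrow> nat \<Rightarrow> nat" where
  "digit n i = n div 5 ^ i mod 5"

definition wmul :: "nat \<Rightarrow> nat \<Rightarrow> nat" where
  "wmul x m = rec_nat m (\<lambda>t r. crn (digit x (x - Suc t)) r) x"

definition cr :: "gen2 \<Rightarrow> gen2 list \<Rightarrow> gen2 list" where
  "cr g r = (case r of [] \<Rightarrow> [g] | h # r' \<Rightarrow> (if h = inv_gen g then r' else g # h # r'))"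

lemma cd_bounds: "cd g \<noteq> 0" "cd g < 5"
  by (auto simp: cd_def)

lemma cd_inj: "cd g = cd h \<longleftrightarrow> g = h"
  by (cases g; cases h) (auto simp: cd_def)

lemma invd_cd: "invd (cd g) = cd (inv_gen g)"
  by (cases g) (auto simp: cd_def invd_def inv_gen_def)

lemma invd_nz: "invd (cd g) \<noteq> 0"
  by (simp add: invd_cd cd_bounds)

lemma enc_cr: "enc (cr g r) = crn (cd g) (enc r)"
proof (cases r)
  case Nil
  then show ?thesis using cd_bounds[of g] invd_nz[of g]
    by (simp add: cr_def crn_def)
next
  case (Cons h r')
  have m: "(cd h + 5 * enc r') mod 5 = cd h" using cd_bounds[of h] by simp
  have d: "(cd h + 5 * enc r') div 5 = enc r'" using cd_bounds[of h] by simp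
  show ?thesis using Cons cd_bounds[of g] cd_bounds[of h] cd_bounds[of "inv_gen g"] cd_inj[of h "inv_gen g"]
    by (simp add: cr_def crn_def m d invd_cd)
qed

lemma red_Cons: "red (g # w) = cr g (red w)"
  by (simp add: cr_def split: list.splits)

lemma red_append: "red (u @ v) = foldr cr u (red v)"
  by (induction u) (auto simp del: red.simps simp add: red_Cons)

lemma reduced_Cons: "reduced (g # w) \<longleftrightarrow> reduced w \<and> (w = [] \<or> hd w \<noteq> inv_gen g)"
proof
  assume r: "reduced (g # w)"
  have "reduced w" unfolding reduced_def
  proof (intro allI impI)
    fix i assume "Suc i < length w"
    then show "w ! Suc i \<noteq> inv_gen (w ! i)" using r[unfolded reduced_def, rule_format, of "Suc i"] by simp
  qed
  moreover have "w = [] \<or> hd w \<noteq> inv_gen g"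
    using r[unfolded reduced_def, rule_format, of 0] by (cases w) auto
  ultimately show "reduced w \<and> (w = [] \<or> hd w \<noteq> inv_gen g)" by blast
next
  assume a: "reduced w \<and> (w = [] \<or> hd w \<noteq> inv_gen g)"
  show "reduced (g # w)" unfolding reduced_def
  proof (intro allI impI)
    fix i assume i: "Suc i < length (g # w)"
    show "(g # w) ! Suc i \<noteq> inv_gen ((g # w) ! i)"
    proof (cases i)
      case 0 then show ?thesis using a i by (cases w) auto
    next
      case (Suc j) then show ?thesis using a i unfolding reduced_def by auto
    qed
  qed
qed

lemma red_reduced: "reduced w \<Longrightarrow> red w = w"
proof (induction w)
  case Nil then show ?case by simp
next
  case (Cons g w)
  then have "reduced w" "w = [] \<or> hd w \<noteq> inv_gen g" by (auto simp: reduced_Cons)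
  with Cons.IH show ?case by (cases w) (auto simp: red_Cons cr_def)
qed

lemma digit_enc: "digit (enc x) i = (if i < length x then cd (x ! i) else 0)"
proof (induction x arbitrary: i)
  case Nil then show ?case by (simp add: digit_def)
next
  case (Cons g x)
  show ?case
  proof (cases i)
    case 0 then show ?thesis using cd_bounds[of g] by (simp add: digit_def)
  next
    case (Suc j)
    have "(cd g + 5 * enc x) div 5 ^ Suc j = ((cd g + 5 * enc x) div 5) div 5 ^ j"
      by (simp add: div_mult2_eq)
    also have "\<dots> = enc x div 5 ^ j" using cd_bounds[of g] by simp
    finally show ?thesis using Cons.IH[of j] Suc by (simp add: digit_def)
  qed
qed

lemma length_le_enc: "length x \<le> enc x"
proof (induction x)
  case (Cons g x) then show ?case using cd_bounds[of g] by simp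
qed simp

lemma wmul_aux:
  assumes "t \<le> enc x"
  shows "rec_nat (enc m) (\<lambda>t r. crn (digit (enc x) (enc x - Suc t)) r) t = enc (foldr cr (drop (enc x - t) x) m)"
  using assms
proof (induction t)
  case 0
  then show ?case using length_le_enc[of x] by simp
next
  case (Suc t)
  let ?K = "enc x"
  let ?j = "?K - Suc t"
  have j: "?K - t = Suc ?j" using Suc.prems by simp
  have IH: "rec_nat (enc m) (\<lambda>t r. crn (digit ?K (?K - Suc t)) r) t = enc (foldr cr (drop (Suc ?j) x) m)"
    using Suc by (simp only: j)
  show ?case
  proof (cases "?j < length x")
    case True
    have "drop ?j x = x ! ?j # drop (Suc ?j) x" using True by (simp add: Cons_nth_drop_Suc)
    then show ?thesis using IH True by (simp add: digit_enc enc_cr)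
  next
    case False
    then show ?thesis using IH by (simp add: digit_enc crn_def)
  qed
qed

lemma wmul_enc: "wmul (enc x) (enc m) = enc (foldr cr x m)"
  using wmul_aux[of "enc x" x m] by (simp add: wmul_def)

lemma wmul_red: "reduced m \<Longrightarrow> wmul (enc x) (enc m) = enc (red (x @ m))"
  by (simp add: wmul_enc red_append red_reduced)

lemma PR_invd: "PR k f \<Longrightarrow> PR k (\<lambda>xs. invd (f xs))"
  unfolding invd_def by (intro PR_I | assumption)+
lemma PR_digit: "PR k f \<Longrightarrow> PR k g \<Longrightarrow> PR k (\<lambda>xs. digit (f xs) (g xs))"
  unfolding digit_def by (intro PR_mod PR_div PR_pow PR_I | assumption)+
lemma PR_crn: "PR k f \<Longrightarrow> PR k g \<Longrightarrow> PR k (\<lambda>xs. crn (f xs) (g xs))"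
  unfolding crn_def by (intro PR_mod PR_div PR_invd PR_I | assumption)+

lemma PR_wmul2: "PR 2 (\<lambda>xs. wmul (xs ! 0) (xs ! 1))"
proof -
  have "PR 2 (\<lambda>xs. rec_nat (xs ! 1) (\<lambda>n r. (\<lambda>ys. crn (digit (ys ! 2) (ys ! 2 - Suc (ys ! 0))) (ys ! 1)) (n # r # xs)) (xs ! 0))"
    by (rule PR_rec) (intro PR_I PR_crn PR_digit | simp)+
  then show ?thesis by (rule PR_cong) (simp add: wmul_def)
qed
lemma PR_wmul: "PR k f \<Longrightarrow> PR k g \<Longrightarrow> PR k (\<lambda>xs. wmul (f xs) (g xs))"
  by (rule PR_lift2[OF PR_wmul2])


type_synonym 'g trans = "nat \<times> nat option \<times> nat \<times> 'g"
type_synonym 'g sstate = "nat \<times> nat \<times> 'g \<times> bool"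

definition stepS :: "('g, 'm) monoid_scheme \<Rightarrow> 'g trans list \<Rightarrow> nat list \<Rightarrow> nat \<Rightarrow> 'g sstate \<Rightarrow> 'g sstate" where
  "stepS G trs w j st = (case st of (q, pos, x, ok) \<Rightarrow>
     (if \<not> ok \<or> length trs \<le> j then st else
      (case trs ! j of (p, s, p', m) \<Rightarrow>
        if p = q \<and> (s = None \<or> (pos < length w \<and> s = Some (w ! pos)))
        then (p', if s = None then pos else Suc pos, x \<otimes>\<^bsub>G\<^esub> m, True)
        else (q, pos, x, False))))"

definition runS :: "('g, 'm) monoid_scheme \<Rightarrow> 'g trans list \<Rightarrow> nat list \<Rightarrow> nat list \<Rightarrow> 'g sstate \<Rightarrow> 'g sstate" where
  "runS G trs w js st = foldl (\<lambda>st j. stepS G trs w j st) st js"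

lemma runS_Nil[simp]: "runS G trs w [] st = st" by (simp add: runS_def)
lemma runS_Cons: "runS G trs w (j # js) st = runS G trs w js (stepS G trs w j st)" by (simp add: runS_def)
lemma runS_append: "runS G trs w (js @ ks) st = runS G trs w ks (runS G trs w js st)" by (simp add: runS_def)

lemma runS_false: "runS G trs w js (q, pos, x, False) = (q, pos, x, False)"
  by (induction js) (simp_all add: runS_Cons stepS_def)

lemma runS_noop: "(\<forall>j\<in>set js. length trs \<le> j) \<Longrightarrow> runS G trs w js st = st"
  by (induction js) (auto simp add: runS_Cons stepS_def split: prod.splits)

lemma trans_idx:
  assumes "(q, s, q', m) \<in> set trs"
  obtains j where "j < length trs" "trs ! j = (q, s, q', m)"
  using assms by (auto simp: in_set_conv_nth)

lemma comp_to_run: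
  assumes tr: "\<And>q s q' m. (q', m) \<in> \<delta> q s \<longleftrightarrow> (q, s, q', m) \<in> set trs"
  assumes "comp G \<delta> q u x n q' x'"
  shows "drop pos w = u \<Longrightarrow> pos \<le> length w \<Longrightarrow>
    \<exists>js. length js = n \<and> (\<forall>j\<in>set js. j < length trs) \<and>
      runS G trs w js (q, pos, x, True) = (q', length w, x', True)"
  using assms(2)
proof (induction arbitrary: pos rule: comp.induct)
  case (comp_nil q x)
  then show ?case by (intro exI[of _ "[]"]) auto
next
  case (comp_read q1 m q a w' x n q' x')
  have "(q, Some a, q1, m) \<in> set trs" using comp_read.hyps(1) tr by blast
  then obtain j where j: "j < length trs" "trs ! j = (q, Some a, q1, m)" by (rule trans_idx)
  have pl: "pos < length w" using comp_read.prems by (cases "pos < length w") auto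
  have wa: "w ! pos = a" and dw: "drop (Suc pos) w = w'"
    using comp_read.prems pl by (auto simp: Cons_nth_drop_Suc[symmetric])
  obtain js where js: "length js = n" "\<forall>j\<in>set js. j < length trs"
      "runS G trs w js (q1, Suc pos, x \<otimes>\<^bsub>G\<^esub> m, True) = (q', length w, x', True)"
    using comp_read.IH[OF dw] pl by auto
  have "stepS G trs w j (q, pos, x, True) = (q1, Suc pos, x \<otimes>\<^bsub>G\<^esub> m, True)"
    using j pl wa by (simp add: stepS_def)
  then show ?case using js j by (intro exI[of _ "j # js"]) (simp add: runS_Cons)
next
  case (comp_eps q1 m q w' x n q' x')
  have "(q, None, q1, m) \<in> set trs" using comp_eps.hyps(1) tr by blast
  then obtain j where j: "j < length trs" "trs ! j = (q, None, q1, m)" by (rule trans_idx)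
  obtain js where js: "length js = n" "\<forall>j\<in>set js. j < length trs"
      "runS G trs w js (q1, pos, x \<otimes>\<^bsub>G\<^esub> m, True) = (q', length w, x', True)"
    using comp_eps.IH comp_eps.prems by auto
  have "stepS G trs w j (q, pos, x, True) = (q1, pos, x \<otimes>\<^bsub>G\<^esub> m, True)"
    using j by (simp add: stepS_def)
  then show ?case using js j by (intro exI[of _ "j # js"]) (simp add: runS_Cons)
qed

lemma run_to_comp:
  assumes tr: "\<And>q s q' m. (q', m) \<in> \<delta> q s \<longleftrightarrow> (q, s, q', m) \<in> set trs"
  shows "runS G trs w js (q, pos, x, True) = (q', length w, x', True) \<Longrightarrow>
    \<exists>n\<le>length js. comp G \<delta> q (drop pos w) x n q' x'"
proof (induction js arbitrary: q pos x)
  case Nil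
  then show ?case by (auto intro: comp_nil)
next
  case (Cons j js)
  show ?case
  proof (cases "length trs \<le> j")
    case True
    then have "runS G trs w js (q, pos, x, True) = (q', length w, x', True)"
      using Cons.prems by (simp add: stepS_def runS_Cons)
    then obtain n where "n \<le> length js" "comp G \<delta> q (drop pos w) x n q' x'" using Cons.IH by blast
    then show ?thesis by (intro exI[of _ n]) auto
  next
    case False
    obtain p s p' m where t: "trs ! j = (p, s, p', m)" by (cases "trs ! j") auto
    have mem: "(p, s, p', m) \<in> set trs" using False t by (metis not_le nth_mem)
    show ?thesis
    proof (cases "p = q \<and> (s = None \<or> (pos < length w \<and> s = Some (w ! pos)))")
      case False2: False
      then have "stepS G trs w j (q, pos, x, True) = (q, pos, x, False)"
        using False t by (simp add: stepS_def)
      then show ?thesis using Cons.prems by (simp add: runS_Cons runS_false)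
    next
      case True
      show ?thesis
      proof (cases s)
        case None
        then have "stepS G trs w j (q, pos, x, True) = (p', pos, x \<otimes>\<^bsub>G\<^esub> m, True)"
          using False t True by (simp add: stepS_def)
        then have "runS G trs w js (p', pos, x \<otimes>\<^bsub>G\<^esub> m, True) = (q', length w, x', True)"
          using Cons.prems by (simp add: runS_Cons)
        then obtain n where n: "n \<le> length js" "comp G \<delta> p' (drop pos w) (x \<otimes>\<^bsub>G\<^esub> m) n q' x'"
          using Cons.IH by blast
        have "(p', m) \<in> \<delta> q None" using tr mem True None by auto
        then have "comp G \<delta> q (drop pos w) x (Suc n) q' x'" using n(2) by (rule comp_eps)
        then show ?thesis using n(1) by auto
      next
        case (Some a)
        then have pl: "pos < length w" and a: "a = w ! pos" using True by auto
        then have "stepS G trs w j (q, pos, x, True) = (p', Suc pos, x \<otimes>\<^bsub>G\<^esub> m, True)"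
          using False t True Some by (simp add: stepS_def)
        then have "runS G trs w js (p', Suc pos, x \<otimes>\<^bsub>G\<^esub> m, True) = (q', length w, x', True)"
          using Cons.prems by (simp add: runS_Cons)
        then obtain n where n: "n \<le> length js" "comp G \<delta> p' (drop (Suc pos) w) (x \<otimes>\<^bsub>G\<^esub> m) n q' x'"
          using Cons.IH by blast
        have "(p', m) \<in> \<delta> q (Some a)" using tr mem True Some by auto
        then have "comp G \<delta> q (a # drop (Suc pos) w) x (Suc n) q' x'" using n(2) by (rule comp_read)
        moreover have "a # drop (Suc pos) w = drop pos w" using pl a by (simp add: Cons_nth_drop_Suc)
        ultimately show ?thesis using n(1) by auto
      qed
    qed
  qed
qed

definition goodS :: "('g, 'm) monoid_scheme \<Rightarrow> nat set \<Rightarrow> nat list \<Rightarrow> 'g sstate \<Rightarrow> bool" where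
  "goodS G Qa w st \<longleftrightarrow> (case st of (q, pos, x, ok) \<Rightarrow> ok \<and> pos = length w \<and> q \<in> Qa \<and> x = \<one>\<^bsub>G\<^esub>)"

lemma accepts_iff_run:
  assumes tr: "\<And>q s q' m. (q', m) \<in> \<delta> q s \<longleftrightarrow> (q, s, q', m) \<in> set trs"
  shows "accepts_within G \<delta> q0 Qa w T \<longleftrightarrow>
    (\<exists>js. length js = T \<and> (\<forall>j\<in>set js. j \<le> length trs) \<and> goodS G Qa w (runS G trs w js (q0, 0, \<one>\<^bsub>G\<^esub>, True)))"
    (is "?L \<longleftrightarrow> ?R")
proof
  assume ?L
  then obtain n q where c: "comp G \<delta> q0 w \<one>\<^bsub>G\<^esub> n q \<one>\<^bsub>G\<^esub>" "q \<in> Qa" "n \<le> T"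
    unfolding accepts_within_def by blast
  obtain js where js: "length js = n" "\<forall>j\<in>set js. j < length trs"
      "runS G trs w js (q0, 0, \<one>\<^bsub>G\<^esub>, True) = (q, length w, \<one>\<^bsub>G\<^esub>, True)"
    using comp_to_run[OF tr c(1), of 0] by auto
  let ?ks = "js @ replicate (T - n) (length trs)"
  have "runS G trs w ?ks (q0, 0, \<one>\<^bsub>G\<^esub>, True) = (q, length w, \<one>\<^bsub>G\<^esub>, True)"
    using js(3) by (simp add: runS_append runS_noop)
  then show ?R using js c by (intro exI[of _ ?ks]) (auto simp: goodS_def)
next
  assume ?R
  then obtain js where js: "goodS G Qa w (runS G trs w js (q0, 0, \<one>\<^bsub>G\<^esub>, True))" "length js = T" by blast
  obtain q pos x ok where e: "runS G trs w js (q0, 0, \<one>\<^bsub>G\<^esub>, True) = (q, pos, x, ok)"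
    by (cases "runS G trs w js (q0, 0, \<one>\<^bsub>G\<^esub>, True)") auto
  then have "ok" "pos = length w" "q \<in> Qa" "x = \<one>\<^bsub>G\<^esub>" using js(1) by (auto simp: goodS_def)
  then have "runS G trs w js (q0, 0, \<one>\<^bsub>G\<^esub>, True) = (q, length w, \<one>\<^bsub>G\<^esub>, True)"
    using e by simp
  then obtain n where "n \<le> length js" "comp G \<delta> q0 (drop 0 w) \<one>\<^bsub>G\<^esub> n q \<one>\<^bsub>G\<^esub>"
    using run_to_comp[OF tr] by blast
  then show ?L unfolding accepts_within_def using js(2) \<open>q \<in> Qa\<close> by auto
qed


abbreviation FF :: "(gen2 list \<times> gen2 list) monoid" where
  "FF \<equiv> free_group2 \<times>\<times> free_group2"

lemma FG_mult[simp]: "x \<otimes>\<^bsub>free_group2\<^esub> y = red (x @ y)"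
  by (simp add: free_group2_def)

lemma FF_mult: "(x1, x2) \<otimes>\<^bsub>FF\<^esub> (m1, m2) = (red (x1 @ m1), red (x2 @ m2))"
  by (simp add: DirProd_def free_group2_def)
lemma FF_one: "\<one>\<^bsub>FF\<^esub> = ([], [])"
  by (simp add: DirProd_def free_group2_def)
lemma FF_carrier: "carrier FF = {w. reduced w} \<times> {w. reduced w}"
  by (simp add: DirProd_def free_group2_def)

lemma reduced_cr: "reduced r \<Longrightarrow> reduced (cr g r)"
  by (cases r) (auto simp: cr_def reduced_Cons)

lemma reduced_red: "reduced (red w)"
proof (induction w)
  case Nil then show ?case by (simp add: reduced_def)
next
  case (Cons g w) then show ?case by (simp only: red_Cons reduced_cr)
qed

definition lab :: "nat option \<Rightarrow> nat" where
  "lab s = (case s of None \<Rightarrow> 0 | Some a \<Rightarrow> Suc a)"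

definition code_tr :: "(gen2 list \<times> gen2 list) trans \<Rightarrow> nat" where
  "code_tr t = (case t of (p, s, p', (m1, m2)) \<Rightarrow> list_encode [p, lab s, p', enc m1, enc m2])"

definition code_aut :: "(gen2 list \<times> gen2 list) trans list \<Rightarrow> nat \<Rightarrow> nat list \<Rightarrow> nat list \<Rightarrow> nat \<Rightarrow> nat" where
  "code_aut trs q0 Qa Sg c = list_encode [list_encode (map code_tr trs), q0, list_encode Qa, list_encode Sg, c]"

definition mk5 :: "nat \<Rightarrow> nat \<Rightarrow> nat \<Rightarrow> nat \<Rightarrow> nat \<Rightarrow> nat" where
  "mk5 q pos x1 x2 ok = pe q (pe pos (pe x1 (pe x2 ok)))"
definition S1 :: "nat \<Rightarrow> nat" where "S1 s = pf s"
definition S2 :: "nat \<Rightarrow> nat" where "S2 s = pf (ps s)"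
definition S3 :: "nat \<Rightarrow> nat" where "S3 s = pf (ps (ps s))"
definition S4 :: "nat \<Rightarrow> nat" where "S4 s = pf (ps (ps (ps s)))"
definition S5 :: "nat \<Rightarrow> nat" where "S5 s = ps (ps (ps (ps s)))"

lemma pf_pe[simp]: "pf (pe a b) = a" by (simp add: pf_def pe_def)
lemma ps_pe[simp]: "ps (pe a b) = b" by (simp add: ps_def pe_def)

lemma S_mk5[simp]: "S1 (mk5 q p x1 x2 ok) = q" "S2 (mk5 q p x1 x2 ok) = p" "S3 (mk5 q p x1 x2 ok) = x1"
  "S4 (mk5 q p x1 x2 ok) = x2" "S5 (mk5 q p x1 x2 ok) = ok"
  by (simp_all add: mk5_def S1_def S2_def S3_def S4_def S5_def)

lemma mk5_S: "mk5 (S1 s) (S2 s) (S3 s) (S4 s) (S5 s) = s"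
  by (simp add: mk5_def S1_def S2_def S3_def S4_def S5_def pe_def pf_def ps_def)

definition TR :: "nat \<Rightarrow> nat" where "TR a = lnth a 0"
definition NT :: "nat \<Rightarrow> nat" where "NT a = llen (TR a)"
definition fld :: "nat \<Rightarrow> nat \<Rightarrow> nat \<Rightarrow> nat" where "fld a j f = lnth (lnth (TR a) j) f"

definition stepN :: "nat \<Rightarrow> nat \<Rightarrow> nat \<Rightarrow> nat \<Rightarrow> nat" where
  "stepN a wc j s = (if S5 s = 0 \<or> NT a \<le> j then s else
     if fld a j 0 = S1 s \<and> (fld a j 1 = 0 \<or> (tls wc (S2 s) \<noteq> 0 \<and> fld a j 1 = Suc (hdc (tls wc (S2 s)))))
     then mk5 (fld a j 2) (if fld a j 1 = 0 then S2 s else Suc (S2 s)) (wmul (S3 s) (fld a j 3)) (wmul (S4 s) (fld a j 4)) 1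
     else mk5 (S1 s) (S2 s) (S3 s) (S4 s) 0)"

definition runN :: "nat \<Rightarrow> nat \<Rightarrow> nat \<Rightarrow> nat \<Rightarrow> nat" where
  "runN a wc cert n = rec_nat (mk5 (lnth a 1) 0 0 0 1) (\<lambda>t s. stepN a wc (lnth cert t) s) n"

definition goodN :: "nat \<Rightarrow> nat \<Rightarrow> nat \<Rightarrow> bool" where
  "goodN a wc s \<longleftrightarrow> S5 s \<noteq> 0 \<and> tls wc (S2 s) = 0 \<and> lmem (lnth a 2) (S1 s) \<and> S3 s = 0 \<and> S4 s = 0"

definition TB :: "nat \<Rightarrow> nat \<Rightarrow> nat" where "TB a wc = lnth a 4 * llen wc + lnth a 4"

definition LB :: "nat \<Rightarrow> nat \<Rightarrow> nat" where "LB n T = rec_nat 0 (\<lambda>_ r. Suc (pe n r)) T"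

definition U :: "nat \<Rightarrow> nat \<Rightarrow> bool" where
  "U a wc \<longleftrightarrow> (\<forall>i<llen wc. lmem (lnth a 3) (lnth wc i)) \<and>
     (\<exists>cert<Suc (LB (NT a) (TB a wc)). goodN a wc (runN a wc cert (TB a wc)))"

definition encS :: "(gen2 list \<times> gen2 list) sstate \<Rightarrow> nat" where
  "encS st = (case st of (q, pos, (x1, x2), ok) \<Rightarrow> mk5 q pos (enc x1) (enc x2) (if ok then 1 else 0))"

definition invS :: "nat list \<Rightarrow> (gen2 list \<times> gen2 list) sstate \<Rightarrow> bool" where
  "invS w st = (case st of (q, pos, (x1, x2), ok) \<Rightarrow> reduced x1 \<and> reduced x2 \<and> pos \<le> length w)"

definition trs_ok :: "(gen2 list \<times> gen2 list) trans list \<Rightarrow> bool" where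
  "trs_ok trs \<longleftrightarrow> (\<forall>t\<in>set trs. case t of (p, s, p', (m1, m2)) \<Rightarrow> reduced m1 \<and> reduced m2)"

lemma code_aut_fields:
  assumes "a = code_aut trs q0 Qa Sg c"
  shows "TR a = list_encode (map code_tr trs)" "NT a = length trs" "lnth a 1 = q0"
    "lnth a 2 = list_encode Qa" "lnth a 3 = list_encode Sg" "lnth a 4 = c"
  using assms by (simp_all del: list_encode.simps add: code_aut_def TR_def NT_def lnth_list llen_list)

lemma fld_code:
  assumes "a = code_aut trs q0 Qa Sg c" "j < length trs" "trs ! j = (p, s, p', (m1, m2))"
  shows "fld a j 0 = p" "fld a j 1 = lab s" "fld a j 2 = p'" "fld a j 3 = enc m1" "fld a j 4 = enc m2"
  using assms(2,3) unfolding fld_def code_aut_fields(1)[OF assms(1)]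
  by (simp_all del: list_encode.simps add: lnth_list code_tr_def)

lemma lab_eq: "lab s = 0 \<longleftrightarrow> s = None" "lab s = Suc b \<longleftrightarrow> s = Some b"
  by (auto simp: lab_def split: option.splits)

lemma enc_0_iff: "enc x = 0 \<longleftrightarrow> x = []"
  using cd_bounds by (cases x) auto

lemma stepN_correct:
  assumes a: "a = code_aut trs q0 Qa Sg c" and ok: "trs_ok trs" and inv: "invS w st"
  shows "stepN a (list_encode w) j (encS st) = encS (stepS FF trs w j st)"
    and "invS w (stepS FF trs w j st)"
proof -
  obtain q pos x1 x2 okf where st: "st = (q, pos, (x1, x2), okf)" by (cases st) auto
  have NT: "NT a = length trs" using code_aut_fields[OF a] by simp
  have "stepN a (list_encode w) j (encS st) = encS (stepS FF trs w j st) \<and> invS w (stepS FF trs w j st)"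
  proof (cases "\<not> okf \<or> length trs \<le> j")
    case True
    then show ?thesis using inv by (auto simp: stepN_def stepS_def st encS_def NT)
  next
    case False
    then have okf: okf and j: "j < length trs" by auto
    obtain p s p' m1 m2 where t: "trs ! j = (p, s, p', (m1, m2))" by (cases "trs ! j") auto
    have red: "reduced m1" "reduced m2" using ok j t unfolding trs_ok_def
      by (metis (mono_tags, lifting) case_prod_conv nth_mem)+
    note f = fld_code[OF a j t]
    have cond: "(lab s = 0 \<or> (tls (list_encode w) pos \<noteq> 0 \<and> lab s = Suc (hdc (tls (list_encode w) pos))))
        \<longleftrightarrow> (s = None \<or> (pos < length w \<and> s = Some (w ! pos)))"
      using tls_list_nz[of w pos] lnth_list[of pos w] by (auto simp: lab_eq lnth_def)
    have x1: "reduced x1" and x2: "reduced x2" and pl: "pos \<le> length w" using inv st by (auto simp: invS_def)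
    show ?thesis
    proof (cases "p = q \<and> (s = None \<or> (pos < length w \<and> s = Some (w ! pos)))")
      case True
      then show ?thesis using okf j t f cond red x1 x2 pl
        by (auto simp: stepN_def stepS_def st encS_def NT FF_mult wmul_red invS_def reduced_red lab_eq)
    next
      case False
      then show ?thesis using okf j t f cond x1 x2 pl
        by (auto simp: stepN_def stepS_def st encS_def NT invS_def)
    qed
  qed
  then show "stepN a (list_encode w) j (encS st) = encS (stepS FF trs w j st)"
    and "invS w (stepS FF trs w j st)" by auto
qed

lemma runN_correct:
  assumes a: "a = code_aut trs q0 Qa Sg c" and ok: "trs_ok trs"
  shows "runN a (list_encode w) cert T = encS (runS FF trs w (map (lnth cert) [0..<T]) (q0, 0, ([], []), True))
     \<and> invS w (runS FF trs w (map (lnth cert) [0..<T]) (q0, 0, ([], []), True))"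
proof (induction T)
  case 0
  then show ?case using code_aut_fields[OF a] by (simp add: runN_def encS_def invS_def reduced_def)
next
  case (Suc T)
  let ?st = "runS FF trs w (map (lnth cert) [0..<T]) (q0, 0, ([], []), True)"
  have eq: "runN a (list_encode w) cert T = encS ?st" and inv: "invS w ?st" using Suc by auto
  have "runN a (list_encode w) cert (Suc T) = stepN a (list_encode w) (lnth cert T) (runN a (list_encode w) cert T)"
    by (simp add: runN_def)
  then show ?case using stepN_correct[OF a ok inv] eq
    by (simp add: runS_append runS_Cons)
qed


lemma FG_one[simp]: "\<one>\<^bsub>free_group2\<^esub> = []" by (simp add: free_group2_def)

lemma all_nth_lists: "(\<forall>i<length w. w ! i \<in> A) \<longleftrightarrow> w \<in> lists A"
  by (auto simp: in_set_conv_nth[where xs=w] intro: nth_mem)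

lemma runS_min: "runS G trs w (map (min (length trs)) js) st = runS G trs w js st"
proof (induction js arbitrary: st)
  case Nil then show ?case by simp
next
  case (Cons j js)
  have "stepS G trs w (min (length trs) j) st = stepS G trs w j st"
    by (cases "length trs \<le> j") (auto simp: stepS_def min_def split: prod.splits)
  then show ?case using Cons by (simp add: runS_Cons)
qed

lemma triangle_mono: "a \<le> b \<Longrightarrow> triangle a \<le> triangle b"
  unfolding triangle_def by (intro div_le_mono mult_le_mono) auto

lemma pe_mono: "a \<le> a' \<Longrightarrow> b \<le> b' \<Longrightarrow> prod_encode (a, b) \<le> prod_encode (a', b')"
  unfolding prod_encode_def using triangle_mono[of "a + b" "a' + b'"] by simp

lemma LB_bound: "\<forall>j\<in>set js. j \<le> N \<Longrightarrow> list_encode js \<le> LB N (length js)"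
proof (induction js)
  case Nil then show ?case by (simp add: LB_def)
next
  case (Cons j js)
  then have "prod_encode (j, list_encode js) \<le> prod_encode (N, LB N (length js))"
    by (intro pe_mono) auto
  then show ?case by (simp add: LB_def pe_def)
qed

lemma map_lnth_list: "map (lnth (list_encode js)) [0..<length js] = js"
  by (rule nth_equalityI) (auto simp: lnth_list)

lemma goodN_correct:
  assumes a: "a = code_aut trs q0 Qa Sg c" and inv: "invS w st"
  shows "goodN a (list_encode w) (encS st) \<longleftrightarrow> goodS FF (set Qa) w st"
proof -
  obtain q pos x1 x2 okf where st: "st = (q, pos, (x1, x2), okf)" by (cases st) auto
  have pl: "pos \<le> length w" using inv st by (simp add: invS_def)
  have "tls (list_encode w) pos = 0 \<longleftrightarrow> pos = length w"
    using tls_list_nz[of w pos] pl by auto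
  then show ?thesis using code_aut_fields[OF a]
    by (auto simp: goodN_def goodS_def st encS_def lmem_list enc_0_iff FF_one)
qed

lemma U_correct:
  assumes a: "a = code_aut trs q0 Qa Sg c" and ok: "trs_ok trs"
    and tr: "\<And>q s q' m. (q', m) \<in> \<delta> q s \<longleftrightarrow> (q, s, q', m) \<in> set trs"
  shows "U a (list_encode w) \<longleftrightarrow> w \<in> lists (set Sg) \<and> accepts_within FF \<delta> q0 (set Qa) w (c * length w + c)"
proof -
  note F = code_aut_fields[OF a]
  have TB: "TB a (list_encode w) = c * length w + c" using F by (simp add: TB_def llen_list)
  let ?T = "c * length w + c"
  let ?st0 = "(q0, 0, ([], []), True) :: (gen2 list \<times> gen2 list) sstate"
  have p1: "(\<forall>i<llen (list_encode w). lmem (lnth a 3) (lnth (list_encode w) i)) \<longleftrightarrow> w \<in> lists (set Sg)"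
    using F all_nth_lists[of w "set Sg"] by (simp add: llen_list lnth_list lmem_list)
  have p2: "(\<exists>cert<Suc (LB (NT a) ?T). goodN a (list_encode w) (runN a (list_encode w) cert ?T))
      \<longleftrightarrow> accepts_within FF \<delta> q0 (set Qa) w ?T"
  proof
    assume "\<exists>cert<Suc (LB (NT a) ?T). goodN a (list_encode w) (runN a (list_encode w) cert ?T)"
    then obtain cert where g: "goodN a (list_encode w) (runN a (list_encode w) cert ?T)" by blast
    let ?js = "map (lnth cert) [0..<?T]"
    have "goodS FF (set Qa) w (runS FF trs w ?js ?st0)"
      using g runN_correct[OF a ok, of w cert ?T] goodN_correct[OF a] by auto
    then have "goodS FF (set Qa) w (runS FF trs w (map (min (length trs)) ?js) ?st0)"
      by (simp only: runS_min)
    then show "accepts_within FF \<delta> q0 (set Qa) w ?T"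
      unfolding accepts_iff_run[OF tr] FF_one[symmetric]
      by (intro exI[of _ "map (min (length trs)) ?js"]) auto
  next
    assume "accepts_within FF \<delta> q0 (set Qa) w ?T"
    then obtain js where js: "length js = ?T" "\<forall>j\<in>set js. j \<le> length trs"
        "goodS FF (set Qa) w (runS FF trs w js ?st0)"
      unfolding accepts_iff_run[OF tr] FF_one by blast
    let ?cert = "list_encode js"
    have le: "?cert < Suc (LB (NT a) ?T)" using LB_bound[OF js(2)] js(1) F by simp
    have m: "map (lnth ?cert) [0..<?T] = js" using map_lnth_list[of js] js(1) by simp
    have "goodN a (list_encode w) (runN a (list_encode w) ?cert ?T)"
      using runN_correct[OF a ok, of w ?cert ?T] goodN_correct[OF a] js(3) m by auto
    then show "\<exists>cert<Suc (LB (NT a) ?T). goodN a (list_encode w) (runN a (list_encode w) cert ?T)"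
      using le by blast
  qed
  show ?thesis unfolding U_def TB using p1 p2 by simp
qed


lemmas PR_J = PR_I PR_pe PR_pf PR_ps PR_lnth PR_llen PR_tls PR_hdc PR_wmul PRP_lmem

lemma PR_stepN4: "PR 4 (\<lambda>xs. stepN (xs ! 0) (xs ! 1) (xs ! 2) (xs ! 3))"
  unfolding stepN_def S1_def S2_def S3_def S4_def S5_def mk5_def fld_def NT_def TR_def
  by (intro PR_J | simp)+

lemma PR_stepN: "PR k f \<Longrightarrow> PR k g \<Longrightarrow> PR k u \<Longrightarrow> PR k v \<Longrightarrow> PR k (\<lambda>xs. stepN (f xs) (g xs) (u xs) (v xs))"
  by (rule PR_lift4[OF PR_stepN4])

lemma PR_runN4: "PR 4 (\<lambda>xs. runN (xs ! 0) (xs ! 1) (xs ! 2) (xs ! 3))"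
proof -
  have "PR 4 (\<lambda>xs. rec_nat (mk5 (lnth (xs ! 0) 1) 0 0 0 1)
      (\<lambda>n r. (\<lambda>ys. stepN (ys ! 2) (ys ! 3) (lnth (ys ! 4) (ys ! 0)) (ys ! 1)) (n # r # xs)) (xs ! 3))"
    by (rule PR_rec) (unfold mk5_def, (intro PR_J PR_stepN | simp)+)
  then show ?thesis by (rule PR_cong) (simp add: runN_def)
qed

lemma PR_runN: "PR k f \<Longrightarrow> PR k g \<Longrightarrow> PR k u \<Longrightarrow> PR k v \<Longrightarrow> PR k (\<lambda>xs. runN (f xs) (g xs) (u xs) (v xs))"
  by (rule PR_lift4[OF PR_runN4])

lemma PR_LB2: "PR 2 (\<lambda>xs. LB (xs ! 0) (xs ! 1))"
proof -
  have "PR 2 (\<lambda>xs. rec_nat 0 (\<lambda>n r. (\<lambda>ys. Suc (pe (ys ! 2) (ys ! 1))) (n # r # xs)) (xs ! 1))"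
    by (rule PR_rec) (intro PR_J | simp)+
  then show ?thesis by (rule PR_cong) (simp add: LB_def)
qed

lemma PR_LB: "PR k f \<Longrightarrow> PR k g \<Longrightarrow> PR k (\<lambda>xs. LB (f xs) (g xs))"
  by (rule PR_lift2[OF PR_LB2])

lemma PRP_U2: "PRP 2 (\<lambda>xs. U (xs ! 0) (xs ! 1))"
  unfolding U_def goodN_def TB_def NT_def TR_def S1_def S2_def S3_def S4_def S5_def
  by (intro PR_J PR_LB PR_runN | simp)+

lemma PRP_U: "PR k f \<Longrightarrow> PR k g \<Longrightarrow> PRP k (\<lambda>xs. U (f xs) (g xs))"
  by (rule PRP_lift2[OF PRP_U2])


lemma FG_carrier[simp]: "carrier free_group2 = {w. reduced w}" by (simp add: free_group2_def)

lemma PRP_RE: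
  assumes "PRP 1 (\<lambda>xs. P (xs ! 0))"
  shows "\<exists>f. \<forall>x. (\<exists>r. rec_eval f [x] r) \<longleftrightarrow> P x"
proof -
  have "PR 1 (\<lambda>xs. 1 - (if P (xs ! 0) then 1 else 0))"
    using PR_sub[OF PR_const assms[unfolded PRP_def]] .
  then have "PR 1 (\<lambda>xs. (\<lambda>a. if P a then 0 else 1) (xs ! 0))"
    by (rule PR_cong) auto
  from PR_lift1[OF this PR_proj[of 1 2]]
  have "PR 2 (\<lambda>ys. if P (ys ! 1) then 0 else 1)" by simp
  then obtain g where g: "computes g 2 (\<lambda>ys. if P (ys ! 1) then 0 else 1)"
    unfolding PR_def by blast
  have "(\<exists>r. rec_eval (Mnf g) [x] r) \<longleftrightarrow> P x" for x
  proof
    assume "\<exists>r. rec_eval (Mnf g) [x] r"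
    then obtain r where "rec_eval (Mnf g) [x] r" by blast
    then have "rec_eval g [r, x] 0" by (auto elim: rec_eval.cases)
    then show "P x" using g unfolding computes_def
      by (metis (no_types, lifting) length_Cons list.size(3) nth_Cons_0 nth_Cons_Suc numeral_2_eq_2 One_nat_def zero_neq_one)
  next
    assume "P x"
    then have "rec_eval g [0, x] 0" using g unfolding computes_def by simp
    then show "\<exists>r. rec_eval (Mnf g) [x] r" by (auto intro: rec_eval.intros)
  qed
  then show ?thesis by blast
qed

lemma linear_bound:
  assumes "(\<lambda>n. real (t n)) \<in> O(\<lambda>n. real n)"
  obtains c :: nat where "\<And>n. t n \<le> c * n + c"
proof -
  obtain C where C: "C > 0" "eventually (\<lambda>n. norm (real (t n)) \<le> C * norm (real n)) at_top"
    using assms unfolding bigo_def by blast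
  then obtain N where N: "\<And>n. n \<ge> N \<Longrightarrow> real (t n) \<le> C * real n"
    unfolding eventually_at_top_linorder by auto
  define c where "c = nat \<lceil>C\<rceil> + (\<Sum>n<N. t n)"
  have "t n \<le> c * n + c" for n
  proof (cases "n \<ge> N")
    case True
    have "real (t n) \<le> C * real n" using N True by blast
    also have "\<dots> \<le> real (nat \<lceil>C\<rceil>) * real n"
      by (intro mult_right_mono real_nat_ceiling_ge) auto
    also have "\<dots> \<le> real c * real n" by (intro mult_right_mono) (auto simp: c_def sum_nonneg)
    also have "\<dots> = real (c * n)" by simp
    finally have "t n \<le> c * n" by linarith
    then show ?thesis by simp
  next
    case False
    then have "t n \<le> (\<Sum>n<N. t n)" by (intro member_le_sum) auto
    then show ?thesis unfolding c_def by simp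
  qed
  then show ?thesis using that by blast
qed

lemma class_code:
  assumes "L \<in> weak_lin_class FF"
  shows "\<exists>a Sg. finite Sg \<and> L \<subseteq> lists Sg \<and> (\<forall>w. U a (list_encode w) \<longleftrightarrow> w \<in> L)"
proof -
  obtain Q :: "nat set" and Sg :: "nat set" and \<delta> q0 Qa and t :: "nat \<Rightarrow> nat" where
    aut: "is_G_automaton FF Q Sg \<delta> q0 Qa" and lang: "G_lang FF Sg \<delta> q0 Qa = L"
    and big: "(\<lambda>n. real (t n)) \<in> O(\<lambda>n. real n)"
    and acc: "\<forall>w\<in>L. accepts_within FF \<delta> q0 Qa w (t (length w))"
    using assms unfolding weak_lin_class_def by blast
  obtain c where c: "\<And>n. t n \<le> c * n + c" using linear_bound[OF big] by blast
  have fQ: "finite Q" and fS: "finite Sg" and QaQ: "Qa \<subseteq> Q"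
    and dfin: "\<And>q s. finite (\<delta> q s)" and dsub: "\<And>q s. \<delta> q s \<subseteq> Q \<times> carrier FF"
    and dempty: "\<And>q s. (q \<notin> Q \<or> (\<exists>a. s = Some a \<and> a \<notin> Sg)) \<Longrightarrow> \<delta> q s = {}"
    using aut unfolding is_G_automaton_def by blast+
  define TS where "TS = {(q, s, q', m). (q', m) \<in> \<delta> q s}"
  let ?U = "\<Union>q\<in>Q. \<Union>s\<in>insert None (Some ` Sg). (\<lambda>(q', m). (q, s, q', m)) ` \<delta> q s"
  have "TS \<subseteq> ?U"
  proof
    fix x assume "x \<in> TS"
    then obtain q s q' m where x: "x = (q, s, q', m)" "(q', m) \<in> \<delta> q s" unfolding TS_def by blast
    have qQ: "q \<in> Q"
    proof (rule ccontr)
      assume "q \<notin> Q" then have "\<delta> q s = {}" using dempty by blast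
      then show False using x(2) by blast
    qed
    have sS: "s \<in> insert None (Some ` Sg)"
    proof (cases s)
      case (Some b)
      have "b \<in> Sg"
      proof (rule ccontr)
        assume "b \<notin> Sg" then have "\<delta> q s = {}" using dempty Some by blast
        then show False using x(2) by blast
      qed
      then show ?thesis using Some by blast
    qed simp
    have "x \<in> (\<lambda>(q', m). (q, s, q', m)) ` \<delta> q s" using x by (auto intro: image_eqI[where x="(q', m)"])
    then show "x \<in> ?U" using qQ sS by blast
  qed
  moreover have "finite ?U"
    by (intro finite_UN_I finite_imageI) (auto simp: fQ fS dfin)
  ultimately have "finite TS" by (rule finite_subset)
  then obtain trs where trs: "set trs = TS" using finite_list by blast
  have tr: "(q', m) \<in> \<delta> q s \<longleftrightarrow> (q, s, q', m) \<in> set trs" for q s q' m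
    using trs unfolding TS_def by auto
  have ok: "trs_ok trs" unfolding trs_ok_def
  proof
    fix x assume "x \<in> set trs"
    then obtain q s q' m1 m2 where x: "x = (q, s, q', (m1, m2))" "(q', (m1, m2)) \<in> \<delta> q s"
      using trs unfolding TS_def by auto
    then have "(m1, m2) \<in> carrier FF" using dsub by blast
    then show "case x of (p, s, p', m1, m2) \<Rightarrow> reduced m1 \<and> reduced m2"
      using x by (simp add: FF_carrier)
  qed
  obtain QaL where QaL: "set QaL = Qa" using finite_list finite_subset[OF QaQ fQ] by blast
  obtain SgL where SgL: "set SgL = Sg" using finite_list fS by blast
  define a where "a = code_aut trs q0 QaL SgL c"
  have Ua: "U a (list_encode w) \<longleftrightarrow> w \<in> lists Sg \<and> accepts_within FF \<delta> q0 Qa w (c * length w + c)" for w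
    using U_correct[OF a_def ok tr] QaL SgL by simp
  have mono: "accepts_within FF \<delta> q0 Qa w k \<Longrightarrow> k \<le> k' \<Longrightarrow> accepts_within FF \<delta> q0 Qa w k'" for w k k'
  proof -
    assume "accepts_within FF \<delta> q0 Qa w k" "k \<le> k'"
    then obtain n q where "comp FF \<delta> q0 w \<one>\<^bsub>FF\<^esub> n q \<one>\<^bsub>FF\<^esub>" "q \<in> Qa" "n \<le> k'"
      unfolding accepts_within_def by force
    then show ?thesis unfolding accepts_within_def by blast
  qed
  have "U a (list_encode w) \<longleftrightarrow> w \<in> L" for w
  proof
    assume "U a (list_encode w)"
    then have "w \<in> lists Sg" "accepts_within FF \<delta> q0 Qa w (c * length w + c)" using Ua by auto
    then have "w \<in> G_lang FF Sg \<delta> q0 Qa" unfolding G_lang_def by blast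
    then show "w \<in> L" using lang by simp
  next
    assume w: "w \<in> L"
    then have "w \<in> G_lang FF Sg \<delta> q0 Qa" using lang by simp
    then have "w \<in> lists Sg" unfolding G_lang_def by simp
    moreover have "accepts_within FF \<delta> q0 Qa w (c * length w + c)"
      using mono[OF acc[rule_format, OF w] c] .
    ultimately show "U a (list_encode w)" using Ua by blast
  qed
  moreover have "L \<subseteq> lists Sg"
  proof
    fix w assume "w \<in> L"
    then have "w \<in> G_lang FF Sg \<delta> q0 Qa" using lang by simp
    then show "w \<in> lists Sg" unfolding G_lang_def by simp
  qed
  ultimately show ?thesis using fS by (intro exI[of _ a] exI[of _ Sg]) simp
qed

lemma class_RE: "L \<in> weak_lin_class FF \<Longrightarrow> L \<in> RE"
proof -
  assume L: "L \<in> weak_lin_class FF"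
  obtain a Sg where a: "finite Sg" "L \<subseteq> lists Sg" "\<forall>w. U a (list_encode w) \<longleftrightarrow> w \<in> L"
    using class_code[OF L] by auto
  have "PRP 1 (\<lambda>xs. U a (xs ! 0))" by (rule PRP_U[OF PR_const PR_proj]) simp
  then obtain f where f: "\<forall>x. (\<exists>r. rec_eval f [x] r) \<longleftrightarrow> U a x"
    using PRP_RE[where P="U a"] by blast
  have "\<forall>w. w \<in> L \<longleftrightarrow> (\<exists>r. rec_eval f [list_encode w] r)" using f a(3) by simp
  then show "L \<in> RE" unfolding RE_def using a(1,2) by blast
qed

definition Dg :: "nat list set" where
  "Dg = {w. w \<in> lists {0} \<and> \<not> U (length w) (list_encode w)}"

lemma Dg_RE: "Dg \<in> RE"
proof -
  have "PRP 1 (\<lambda>xs. (\<forall>i<llen (xs ! 0). lnth (xs ! 0) i = 0) \<and> \<not> U (llen (xs ! 0)) (xs ! 0))"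
    by (intro PR_J PRP_U | simp)+
  then obtain f where f: "\<forall>x. (\<exists>r. rec_eval f [x] r) \<longleftrightarrow>
      (\<forall>i<llen x. lnth x i = 0) \<and> \<not> U (llen x) x"
    using PRP_RE[where P="\<lambda>x. (\<forall>i<llen x. lnth x i = 0) \<and> \<not> U (llen x) x"] by blast
  have "w \<in> Dg \<longleftrightarrow> (\<exists>r. rec_eval f [list_encode w] r)" for w
    using f all_nth_lists[of w "{0}"] by (simp add: Dg_def llen_list lnth_list)
  moreover have "Dg \<subseteq> lists {0}" unfolding Dg_def by blast
  ultimately show ?thesis unfolding RE_def by (intro CollectI exI[of _ "{0}"] conjI exI[of _ f]) auto
qed

lemma Dg_not_class: "Dg \<notin> weak_lin_class FF"
proof
  assume D: "Dg \<in> weak_lin_class FF"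
  obtain a where a: "\<forall>w. U a (list_encode w) \<longleftrightarrow> w \<in> Dg" using class_code[OF D] by auto
  let ?w = "replicate a (0::nat)"
  have "?w \<in> Dg \<longleftrightarrow> \<not> U a (list_encode ?w)" unfolding Dg_def by auto
  then show False using a by blast
qed

theorem theorem4p13:
  shows "(weak_lin_class (free_group2 \<times>\<times> free_group2) :: nat list set set) \<subset> RE"
proof -
  have "weak_lin_class FF \<subseteq> RE" using class_RE by blast
  moreover have "weak_lin_class FF \<noteq> RE" using Dg_RE Dg_not_class by metis
  ultimately show ?thesis by (rule psubsetI)
qed


end
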